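(* Let $K$ be a circle of radius $1$ and centre $O$. Let $A,B\in K$ be such that the triangle $OAB$ is positively (counter-clockwise) oriented and $\eta=\angle BOA<1/10$. Let $K_A$ and $K_B$ be the circles obtained by rotating $K$ about the points $A$ and $B$ in the negative direction by the angles $\alpha$ and $\beta$ respectively, where $0<\alpha<3\beta/4$ and $\beta<\eta$. Then one of the intersection points of $K_A$ and $K_B$ lies outside $K$, and its distance from $A$ is less than $50\eta$.
   Context: The positive direction of rotation is counter-clockwise; the negative direction is clockwise. *)

theory Defs
  imports "HOL-Analysis.Analysis"
begin

text \<open>Points of the plane are complex numbers. Rotation about the point P by the
  angle t (positive = counter-clockwise, negative = clockwise).\<close>
definition rot :: "complex \<Rightarrow> real \<Rightarrow> complex \<Rightarrow> complex" where
  "rot P t z = P + (z - P) * cis t"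

end

theory Submission
  imports Defs
begin
lemma cos_lb: "1 - x^2/2 \<le> cos (x::real)"
proof -
  have "cos x = cos (2*(x/2))" by simp
  also have "\<dots> = 1 - 2 * (sin (x/2))^2" by (rule cos_double_sin)
  finally have e: "cos x = 1 - 2 * (sin (x/2))^2" .
  have "(sin (x/2))^2 \<le> (x/2)^2"
    using abs_sin_x_le_abs_x[of "x/2"] by (metis abs_ge_zero power2_abs power_mono)
  then show ?thesis using e by (simp add: power_divide)
qed

lemma sin_lb: assumes "0 \<le> (x::real)" shows "x - x^3/6 \<le> sin x"
proof -
  let ?f = "\<lambda>x. sin x - x + x^3/6"
  have "\<And>u. \<lbrakk>0 \<le> u; u \<le> x\<rbrakk> \<Longrightarrow> \<exists>y. (?f has_real_derivative y) (at u) \<and> y \<ge> 0"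
  proof -
    fix u :: real
    have "(?f has_real_derivative cos u - 1 + u^2/2) (at u)"
      by (auto intro!: derivative_eq_intros simp: field_simps power2_eq_square)
    moreover have "cos u - 1 + u^2/2 \<ge> 0" using cos_lb[of u] by simp
    ultimately show "\<exists>y. (?f has_real_derivative y) (at u) \<and> y \<ge> 0" by blast
  qed
  then have "?f x \<ge> ?f 0" by (rule DERIV_nonneg_imp_nondecreasing [OF assms])
  then show ?thesis by simp
qed
lemma real_part:
  fixes \<eta> \<alpha> \<beta> :: real
  assumes "0 < \<eta>" and "\<eta> < 1/10" and "0 < \<alpha>" and "\<alpha> < 3 * \<beta> / 4" and "\<beta> < \<eta>"
  defines "a \<equiv> 1 - cos \<alpha> - cos \<eta> + cos (\<eta> - \<beta>)"
      and "b \<equiv> sin \<alpha> - sin \<eta> + sin (\<eta> - \<beta>)"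
  shows "a \<ge> 0" "a^2 + b^2 + 2*a* cos (12*\<eta>) + 2*b* sin (12*\<eta>) \<le> 0"
proof -
  have bp: "\<beta> > 0" using assms by linarith
  have pi3: "pi > 3" by (rule pi_gt3)
  have cd: "cos (\<eta> - \<beta>) - cos \<eta> = 2 * sin ((2*\<eta>-\<beta>)/2) * sin (\<beta>/2)"
    using cos_diff_cos[of "\<eta> - \<beta>" \<eta>] by (simp add: field_simps)
  have s1: "0 \<le> sin ((2*\<eta>-\<beta>)/2)" "sin ((2*\<eta>-\<beta>)/2) \<le> (2*\<eta>-\<beta>)/2"
  proof -
    show "0 \<le> sin ((2*\<eta>-\<beta>)/2)" by (rule sin_ge_zero) (use assms bp pi3 in auto)
    show "sin ((2*\<eta>-\<beta>)/2) \<le> (2*\<eta>-\<beta>)/2" by (rule sin_x_le_x) (use assms bp in auto)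
  qed
  have s2: "0 \<le> sin (\<beta>/2)" "sin (\<beta>/2) \<le> \<beta>/2"
  proof -
    show "0 \<le> sin (\<beta>/2)" by (rule sin_ge_zero) (use assms bp pi3 in auto)
    show "sin (\<beta>/2) \<le> \<beta>/2" by (rule sin_x_le_x) (use assms bp in auto)
  qed
  have cdp: "0 \<le> cos (\<eta> - \<beta>) - cos \<eta>" using cd s1 s2 by simp
  have "sin ((2*\<eta>-\<beta>)/2) * sin (\<beta>/2) \<le> ((2*\<eta>-\<beta>)/2) * (\<beta>/2)"
    using s1 s2 by (intro mult_mono) auto
  then have "cos (\<eta> - \<beta>) - cos \<eta> \<le> 2 * (((2*\<eta>-\<beta>)/2) * (\<beta>/2))" using cd by linarith
  also have "\<dots> = \<eta> * \<beta> - \<beta>*\<beta>/2" by (simp add: field_simps)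
  also have "\<dots> \<le> \<eta> * \<beta>" by simp
  finally have cdu: "cos (\<eta> - \<beta>) - cos \<eta> \<le> \<eta> * \<beta>" .
  have ca: "0 \<le> 1 - cos \<alpha>" "1 - cos \<alpha> \<le> \<alpha>^2/2" using cos_lb[of \<alpha>] by auto
  show a0: "a \<ge> 0" using ca cdp unfolding a_def by linarith
  have "\<alpha>^2 \<le> (3*\<beta>/4)^2" using assms by (intro power_mono) auto
  also have "\<dots> \<le> (9/16) * (\<eta>*\<beta>)" using assms bp
    by (simp add: power2_eq_square mult_right_mono)
  finally have au: "a \<le> (41/32) * (\<eta>*\<beta>)" using ca cdu unfolding a_def by linarith
  have eb: "\<eta>*\<beta> \<le> \<beta>/10" using assms bp by (simp add: mult_right_mono)
  have "a^2 \<le> ((41/32) * (\<eta>*\<beta>))^2" using a0 au by (intro power_mono) auto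
  also have "\<dots> = (41/32)^2 * (\<eta>*\<beta>) * (\<eta>*\<beta>)" by (simp add: power2_eq_square)
  also have "\<dots> \<le> (41/32)^2 * (\<eta>*\<beta>) * (\<beta>/10)" using eb assms bp
    by (intro mult_left_mono) auto
  also have "\<dots> = (\<eta>*\<beta>) * ((41/32)^2 * (\<beta>/10))" by (simp add: algebra_simps)
  also have "\<dots> \<le> (\<eta>*\<beta>) * (1/50)" using assms bp by (intro mult_left_mono) (auto simp: power2_eq_square)
  finally have a2: "a^2 \<le> (1/50) * (\<eta>*\<beta>)" by (simp add: algebra_simps)
  have sd: "sin \<eta> - sin (\<eta> - \<beta>) = 2 * sin (\<beta>/2) * cos ((2*\<eta>-\<beta>)/2)"
    using sin_diff_sin[of \<eta> "\<eta> - \<beta>"] by (simp add: field_simps)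
  have c1: "cos ((2*\<eta>-\<beta>)/2) \<le> 1" by simp
  have "((2*\<eta>-\<beta>)/2)^2 \<le> \<eta>^2" using assms bp by (intro power_mono) auto
  also have "\<eta>^2 \<le> (1/10)^2" using assms by (intro power_mono) auto
  finally have "((2*\<eta>-\<beta>)/2)^2 \<le> 1/100" by (simp add: power_divide)
  then have c2: "cos ((2*\<eta>-\<beta>)/2) \<ge> 199/200" using cos_lb[of "(2*\<eta>-\<beta>)/2"] by linarith
  have "(\<beta>/2)^3 \<le> (\<beta>/2)^2 * (1/20)" using assms bp
    by (simp add: power3_eq_cube power2_eq_square mult_left_mono)
  also have "(\<beta>/2)^2 * (1/20) \<le> (\<beta>/2) * (1/20) * (1/20)" using assms bp
    by (simp add: power2_eq_square mult_left_mono)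
  finally have s3: "sin (\<beta>/2) \<ge> (\<beta>/2) * (2399/2400)" using sin_lb[of "\<beta>/2"] bp by linarith
  have "(\<beta>/2) * (2399/2400) * (199/200) \<le> sin (\<beta>/2) * cos ((2*\<eta>-\<beta>)/2)"
    using s3 c2 bp by (intro mult_mono) auto
  then have "sin \<eta> - sin (\<eta> - \<beta>) \<ge> (99/100) * \<beta>" using sd bp by simp
  moreover have "sin \<alpha> \<le> \<alpha>" using assms by (intro sin_x_le_x) auto
  ultimately have bu: "b \<le> -(6/25) * \<beta>" unfolding b_def using assms by linarith
  have "sin (\<beta>/2) * cos ((2*\<eta>-\<beta>)/2) \<le> \<beta>/2 * 1" using s2 c1 c2 by (intro mult_mono) auto
  then have "sin \<eta> - sin (\<eta> - \<beta>) \<le> \<beta>" using sd by simp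
  moreover have "sin \<alpha> \<ge> 0" using assms pi3 by (intro sin_ge_zero) auto
  ultimately have bl: "b \<ge> -\<beta>" unfolding b_def by linarith
  have "\<bar>b\<bar> \<le> \<bar>\<beta>\<bar>" using bl bu bp by linarith
  then have "b^2 \<le> \<beta>^2" by (simp add: abs_le_square_iff)
  moreover have "\<beta>^2 \<le> \<eta> * \<beta>" using assms bp by (simp add: power2_eq_square mult_right_mono)
  ultimately have b2: "b^2 \<le> \<eta> * \<beta>" by linarith
  have t0: "0 \<le> 12*\<eta>" using assms by simp
  have "(12*\<eta>)^3 = (12*\<eta>) * (12*\<eta>)^2" by (simp add: power3_eq_cube power2_eq_square)
  also have "\<dots> \<le> (12*\<eta>) * (36/25)"
  proof (intro mult_left_mono)
    have "(12*\<eta>)^2 \<le> (6/5)^2" using assms by (intro power_mono) auto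
    then show "(12*\<eta>)^2 \<le> 36/25" by (simp add: power2_eq_square)
  qed (use assms in auto)
  finally have sl: "sin (12*\<eta>) \<ge> (12*\<eta>) * (19/25)" using sin_lb[OF t0] by linarith
  have "2*b* sin (12*\<eta>) \<le> 2*(-(6/25) * \<beta>) * ((12*\<eta>) * (19/25))"
  proof -
    have "-b * ((12*\<eta>) * (19/25)) \<le> -b * sin (12*\<eta>)" using sl bu bp by (intro mult_left_mono) auto
    moreover have "(6/25)*\<beta> * ((12*\<eta>) * (19/25)) \<le> -b * ((12*\<eta>) * (19/25))"
      using bu assms by (intro mult_right_mono) auto
    ultimately have "(6/25)*\<beta> * ((12*\<eta>) * (19/25)) \<le> -b * sin (12*\<eta>)" by linarith
    then show ?thesis by linarith
  qed
  moreover have "0 \<le> \<eta>*\<beta>" using assms bp by simp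
  moreover have "2*(-(6/25) * \<beta>) * ((12*\<eta>) * (19/25)) = -(2736/625)*(\<eta>*\<beta>)" by (simp add: algebra_simps)
  moreover have "2*a* cos (12*\<eta>) \<le> 2*a" using a0 by (simp add: mult_left_le)
  ultimately show "a^2 + b^2 + 2*a* cos (12*\<eta>) + 2*b* sin (12*\<eta>) \<le> 0"
    using a2 b2 au \<open>0 \<le> \<eta>*\<beta>\<close> \<open>2*(-(6/25) * \<beta>) * ((12*\<eta>) * (19/25)) = -(2736/625)*(\<eta>*\<beta>)\<close> by linarith
qed

theorem lemma3:
  fixes C A B :: complex and \<eta> \<alpha> \<beta> :: real
  assumes "A \<in> sphere C 1" and "B \<in> sphere C 1"
    and "B - C = (A - C) * cis \<eta>"
    and "0 < \<eta>" and "\<eta> < 1/10"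
    and "0 < \<alpha>" and "\<alpha> < 3 * \<beta> / 4" and "\<beta> < \<eta>"
  shows "\<exists>z. z \<in> rot A (-\<alpha>) ` sphere C 1 \<and> z \<in> rot B (-\<beta>) ` sphere C 1
            \<and> z \<notin> cball C 1 \<and> dist z A < 50 * \<eta>"
proof -
  define u where "u = A - C"
  have nu: "norm u = 1" using assms(1) by (simp add: u_def dist_norm norm_minus_commute)
  have Au: "A = C + u" and Bu: "B = C + u * cis \<eta>" using assms(3) by (simp_all add: u_def algebra_simps)
  define a where "a = 1 - cos \<alpha> - cos \<eta> + cos (\<eta> - \<beta>)"
  define b where "b = sin \<alpha> - sin \<eta> + sin (\<eta> - \<beta>)"
  have a0: "a \<ge> 0" and g12: "a^2 + b^2 + 2*a* cos (12*\<eta>) + 2*b* sin (12*\<eta>) \<le> 0"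
    using real_part[OF assms(4-8)] unfolding a_def b_def by auto
  define g where "g = (\<lambda>t. a^2 + b^2 + 2*a* cos t + 2*b* sin t)"
  have "g (12*\<eta>) \<le> 0" using g12 by (simp add: g_def)
  moreover have "0 \<le> g 0" using a0 by (simp add: g_def)
  moreover have "0 \<le> 12*\<eta>" using assms by simp
  moreover have "\<forall>x. 0 \<le> x \<and> x \<le> 12*\<eta> \<longrightarrow> isCont g x"
    unfolding g_def by (auto intro!: continuous_intros)
  ultimately obtain \<theta> where th: "0 \<le> \<theta>" "\<theta> \<le> 12*\<eta>" "g \<theta> = 0"
    using IVT2[of g "12*\<eta>" 0 0] by blast
  have pi3: "pi > 3" by (rule pi_gt3)
  define q where "q = Complex (1 - cos \<alpha> + cos \<theta>) (sin \<alpha> + sin \<theta>)"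
  define z where "z = C + u * q"
  have z1: "z \<in> rot A (-\<alpha>) ` sphere C 1"
  proof
    show "C + u * cis (\<theta> + \<alpha>) \<in> sphere C 1" using nu by (simp add: dist_norm norm_mult)
    have e: "cis (\<theta> + \<alpha>) * cis (-\<alpha>) = cis \<theta>" by (simp add: cis_mult)
    have qe: "q = 1 + cis \<theta> - cis (-\<alpha>)" by (simp add: complex_eq_iff q_def)
    show "z = rot A (-\<alpha>) (C + u * cis (\<theta> + \<alpha>))"
    proof -
      have "C + u + (C + u * cis (\<theta> + \<alpha>) - (C + u)) * cis (-\<alpha>)
          = C + u + u * (cis (\<theta> + \<alpha>) * cis (-\<alpha>)) - u * cis (-\<alpha>)" by algebra
      also have "\<dots> = C + u * q" unfolding e qe by algebra
      finally show ?thesis unfolding rot_def z_def Au by simp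
    qed
  qed
  define v where "v = cis \<eta> + (q - cis \<eta>) * cis \<beta>"
  have z2: "z \<in> rot B (-\<beta>) ` sphere C 1"
  proof
    have ve: "v = cis \<beta> * Complex (a + cos \<theta>) (b + sin \<theta>)"
    proof -
      have c: "Complex (a + cos \<theta>) (b + sin \<theta>) = q - cis \<eta> + cis (\<eta> - \<beta>)"
        by (simp add: complex_eq_iff q_def a_def b_def)
      have h1: "cis \<beta> * cis (\<eta> - \<beta>) = cis \<eta>" by (simp add: cis_mult)
      have "cis \<beta> * (q - cis \<eta> + cis (\<eta> - \<beta>)) = cis \<beta> * q - cis \<beta> * cis \<eta> + cis \<beta> * cis (\<eta> - \<beta>)"
        by algebra
      also have "\<dots> = v" unfolding h1 v_def by algebra
      finally show ?thesis unfolding c by simp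
    qed
    have "norm v = sqrt ((a + cos \<theta>)^2 + (b + sin \<theta>)^2)" by (simp add: ve norm_mult complex_norm)
    also have "(a + cos \<theta>)^2 + (b + sin \<theta>)^2 = g \<theta> + ((sin \<theta>)^2 + (cos \<theta>)^2)"
      by (simp add: g_def power2_eq_square algebra_simps)
    finally have "norm v = 1" using th by simp
    then show "C + u * v \<in> sphere C 1" using nu by (simp add: dist_norm norm_mult)
    have h: "cis \<beta> * cis (-\<beta>) = 1" by (simp add: cis_mult)
    show "z = rot B (-\<beta>) (C + u * v)"
    proof -
      have "C + u * cis \<eta> + (C + u * v - (C + u * cis \<eta>)) * cis (-\<beta>)
         = C + u * cis \<eta> + u * (cis \<eta> * cis (-\<beta>)) + u * q * (cis \<beta> * cis (-\<beta>)) - u * cis \<eta> * (cis \<beta> * cis (-\<beta>))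
           - u * (cis \<eta> * cis (-\<beta>))"
        unfolding v_def by algebra
      also have "\<dots> = C + u * q" unfolding h by algebra
      finally show ?thesis unfolding rot_def z_def Bu by simp
    qed
  qed
  have nq: "norm q > 1"
  proof -
    have c1: "cos \<alpha> < 1" using cos_monotone_0_pi[of 0 \<alpha>] assms pi3 by simp
    have s1: "sin \<alpha> > 0" using assms pi3 by (intro sin_gt_zero) auto
    have s2: "sin \<theta> \<ge> 0" using assms pi3 th by (intro sin_ge_zero) auto
    have ct: "0 < 1 + cos \<theta>"
    proof -
      have "\<theta>^2 \<le> (12*\<eta>)^2" using th by (intro power_mono) auto
      moreover have "(12*\<eta>)^2 \<le> (6/5)^2" using assms by (intro power_mono) auto
      ultimately have "\<theta>^2 \<le> 36/25" by (simp add: power2_eq_square)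
      then show ?thesis using cos_lb[of \<theta>] by linarith
    qed
    have p1: "0 < (1 - cos \<alpha>) * (1 + cos \<theta>)" using c1 ct by simp
    have p2: "0 \<le> sin \<alpha> * sin \<theta>" using s1 s2 by simp
    have "(1 - cos \<alpha> + cos \<theta>)^2 + (sin \<alpha> + sin \<theta>)^2
        = 1 + 2*((1 - cos \<alpha>) * (1 + cos \<theta>)) + 2 * (sin \<alpha> * sin \<theta>)"
      by (simp add: power2_eq_square algebra_simps) (use sin_cos_squared_add3[of \<alpha>] sin_cos_squared_add3[of \<theta>] in linarith)
    also have "\<dots> > 1" using p1 p2 by linarith
    finally have "1 < (1 - cos \<alpha> + cos \<theta>)^2 + (sin \<alpha> + sin \<theta>)^2" .
    then show ?thesis by (simp add: q_def complex_norm)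
  qed
  have z3: "z \<notin> cball C 1" using nq nu by (simp add: z_def dist_norm norm_mult)
  have "norm (q - 1) \<le> \<theta> + \<alpha>"
  proof -
    have "norm (q - 1) = sqrt ((cos \<theta> - cos \<alpha>)^2 + (sin \<alpha> + sin \<theta>)^2)"
    proof -
      have "q - 1 = Complex (cos \<theta> - cos \<alpha>) (sin \<alpha> + sin \<theta>)" by (simp add: q_def complex_eq_iff)
      then show ?thesis by (simp add: complex_norm)
    qed
    also have "(cos \<theta> - cos \<alpha>)^2 + (sin \<alpha> + sin \<theta>)^2
        = 2 - 2 * cos (\<theta> + \<alpha>)"
      by (simp add: power2_eq_square algebra_simps cos_add) (use sin_cos_squared_add3[of \<alpha>] sin_cos_squared_add3[of \<theta>] in linarith)
    also have "\<dots> \<le> (\<theta> + \<alpha>)^2" using cos_lb[of "\<theta> + \<alpha>"] by linarith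
    finally show ?thesis using th assms by (simp add: real_sqrt_le_iff)
  qed
  moreover have "dist z A = norm (q - 1)"
  proof -
    have "z - A = u * (q - 1)" by (simp add: z_def Au algebra_simps)
    then show ?thesis using nu by (simp add: dist_norm norm_mult)
  qed
  ultimately have z4: "dist z A < 50 * \<eta>" using th assms by linarith
  show ?thesis using z1 z2 z3 z4 by blast
qed

end
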